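(* Let $M=\mathbb N\cup\{0\}$ with base point $0$ and metric $d(n,0)=n!$ for $n\ge1$ and $d(n,m)=n!+m!$ for distinct $n,m\ge1$. Define $f\colon M\to M$ by $f(0)=0$ and $f(n)=n-1$ for $n\ge1$. Then $f$ is Lipschitz, $f(M)=M$ is not totally bounded, and $\widehat f\colon\mathcal F(M)\to\mathcal F(M)$ is compact.
   Context: Scalars are $\mathbb K=\mathbb R$ or $\mathbb C$. For a pointed metric space $(M,d,0_M)$, $\mathrm{Lip}_0(M)$ denotes the Banach space of Lipschitz functions $g\colon M\to\mathbb K$ with $g(0_M)=0$ normed by the best Lipschitz constant; $\delta(x)\in\mathrm{Lip}_0(M)^*$ is evaluation at $x$; the Lipschitz-free space $\mathcal F(M)$ is the norm-closed linear span of $\{\delta(x):x\in M\}$ in $\mathrm{Lip}_0(M)^*$. For a Lipschitz map $f\colon M\to N$ with $f(0_M)=0_N$, $\widehat f\colon\mathcal F(M)\to\mathcal F(N)$ is the unique bounded linear operator with $\widehat f(\delta(x))=\delta(f(x))$ for all $x\in M$. *)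

theory Defs
  imports "HOL-Analysis.Analysis"
begin

definition dM :: "nat \<Rightarrow> nat \<Rightarrow> real" where
  "dM n m = (if n = m then 0 else if n = 0 then fact m else if m = 0 then fact n
             else fact n + fact m)"

definition fM :: "nat \<Rightarrow> nat" where
  "fM n = (if n = 0 then 0 else n - 1)"

definition lipschitz_map :: "('m \<Rightarrow> 'm \<Rightarrow> real) \<Rightarrow> ('m \<Rightarrow> 'm) \<Rightarrow> bool" where
  "lipschitz_map d f = (\<exists>L. \<forall>x y. d (f x) (f y) \<le> L * d x y)"

definition totally_bounded_d :: "('m \<Rightarrow> 'm \<Rightarrow> real) \<Rightarrow> 'm set \<Rightarrow> bool" where
  "totally_bounded_d d A = (\<forall>e>0. \<exists>S. finite S \<and> S \<subseteq> A \<and> (\<forall>x\<in>A. \<exists>s\<in>S. d x s < e))"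

definition lip_ratios :: "('m \<Rightarrow> 'm \<Rightarrow> real) \<Rightarrow> ('m \<Rightarrow> 'k::real_normed_vector) \<Rightarrow> real set" where
  "lip_ratios d g = (\<lambda>(x, y). norm (g x - g y) / d x y) ` {(x, y). x \<noteq> y}"

definition Lip0 :: "('m \<Rightarrow> 'm \<Rightarrow> real) \<Rightarrow> 'm \<Rightarrow> ('m \<Rightarrow> 'k::real_normed_field) set" where
  "Lip0 d z = {g. g z = 0 \<and> bdd_above (lip_ratios d g)}"

definition lipnorm :: "('m \<Rightarrow> 'm \<Rightarrow> real) \<Rightarrow> ('m \<Rightarrow> 'k::real_normed_vector) \<Rightarrow> real" where
  "lipnorm d g = Sup (insert 0 (lip_ratios d g))"

definition Lip0_ball :: "('m \<Rightarrow> 'm \<Rightarrow> real) \<Rightarrow> 'm \<Rightarrow> ('m \<Rightarrow> 'k::real_normed_field) set" where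
  "Lip0_ball d z = {g \<in> Lip0 d z. lipnorm d g \<le> 1}"

text \<open>Elements of Lip_0(M)^* are represented by functions on (scalar) functions; only
  their values on Lip_0(M) matter.  Dual norm:\<close>
definition dnorm :: "('m \<Rightarrow> 'm \<Rightarrow> real) \<Rightarrow> 'm \<Rightarrow> (('m \<Rightarrow> 'k::real_normed_field) \<Rightarrow> 'k) \<Rightarrow> real" where
  "dnorm d z \<phi> = Sup ((\<lambda>g. norm (\<phi> g)) ` Lip0_ball d z)"

definition Lip0_dual :: "('m \<Rightarrow> 'm \<Rightarrow> real) \<Rightarrow> 'm \<Rightarrow> (('m \<Rightarrow> 'k::real_normed_field) \<Rightarrow> 'k) set" where
  "Lip0_dual d z = {\<phi>.
     (\<forall>g\<in>Lip0 d z. \<forall>h\<in>Lip0 d z. \<forall>a b. \<phi> (\<lambda>x. a * g x + b * h x) = a * \<phi> g + b * \<phi> h)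
     \<and> bdd_above ((\<lambda>g. norm (\<phi> g)) ` Lip0_ball d z)}"

definition delta :: "'m \<Rightarrow> (('m \<Rightarrow> 'k) \<Rightarrow> 'k)" where
  "delta x = (\<lambda>g. g x)"

definition delta_span :: "(('m \<Rightarrow> 'k::real_normed_field) \<Rightarrow> 'k) set" where
  "delta_span = {(\<lambda>g. \<Sum>x\<in>S. c x * delta x g) | S c. finite S}"

definition free_space :: "('m \<Rightarrow> 'm \<Rightarrow> real) \<Rightarrow> 'm \<Rightarrow> (('m \<Rightarrow> 'k::real_normed_field) \<Rightarrow> 'k) set" where
  "free_space d z = {\<phi> \<in> Lip0_dual d z.
      \<forall>e>0. \<exists>\<psi>\<in>delta_span. dnorm d z (\<lambda>g. \<phi> g - \<psi> g) < e}"

definition dual_eq :: "('m \<Rightarrow> 'm \<Rightarrow> real) \<Rightarrow> 'm \<Rightarrow> (('m \<Rightarrow> 'k::real_normed_field) \<Rightarrow> 'k)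
                       \<Rightarrow> (('m \<Rightarrow> 'k) \<Rightarrow> 'k) \<Rightarrow> bool" where
  "dual_eq d z \<phi> \<psi> = (\<forall>g\<in>Lip0 d z. \<phi> g = \<psi> g)"

definition is_linearization ::
  "('m \<Rightarrow> 'm \<Rightarrow> real) \<Rightarrow> 'm \<Rightarrow> ('m \<Rightarrow> 'm)
   \<Rightarrow> ((('m \<Rightarrow> 'k::real_normed_field) \<Rightarrow> 'k) \<Rightarrow> (('m \<Rightarrow> 'k) \<Rightarrow> 'k)) \<Rightarrow> bool" where
  "is_linearization d z f T =
     ((\<forall>\<phi>\<in>free_space d z. T \<phi> \<in> free_space d z)
      \<and> (\<forall>\<phi>\<in>free_space d z. \<forall>\<psi>\<in>free_space d z. \<forall>a b.
            dual_eq d z (T (\<lambda>g. a * \<phi> g + b * \<psi> g)) (\<lambda>g. a * T \<phi> g + b * T \<psi> g))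
      \<and> (\<exists>C. \<forall>\<phi>\<in>free_space d z. dnorm d z (T \<phi>) \<le> C * dnorm d z \<phi>)
      \<and> (\<forall>x. dual_eq d z (T (delta x)) (delta (f x))))"

text \<open>Compact operator on F(M): the image of the closed unit ball is relatively compact,
  stated sequentially.\<close>
definition compact_op ::
  "('m \<Rightarrow> 'm \<Rightarrow> real) \<Rightarrow> 'm
   \<Rightarrow> ((('m \<Rightarrow> 'k::real_normed_field) \<Rightarrow> 'k) \<Rightarrow> (('m \<Rightarrow> 'k) \<Rightarrow> 'k)) \<Rightarrow> bool" where
  "compact_op d z T =
     (\<forall>s :: nat \<Rightarrow> (('m \<Rightarrow> 'k) \<Rightarrow> 'k). (\<forall>n. s n \<in> free_space d z \<and> dnorm d z (s n) \<le> 1) \<longrightarrow>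
        (\<exists>r \<psi>. strict_mono r \<and> \<psi> \<in> free_space d z \<and>
           (\<lambda>n. dnorm d z (\<lambda>g. T (s (r n)) g - \<psi> g)) \<longlonglongrightarrow> 0))"

end

theory Submission
  imports Defs "HOL-Library.Diagonal_Subsequence"
begin


abbreviation "BL \<equiv> Lip0_ball dM (0::nat)"

lemma dM_pos: "x \<noteq> y \<Longrightarrow> dM x y > 0"
  by (simp add: dM_def add_pos_pos)

lemma dM_bound:
  fixes g :: "nat \<Rightarrow> 'k::real_normed_field"
  assumes "g 0 = 0" "\<And>n. norm (g n) \<le> L * fact n" "L \<ge> 0" "x \<noteq> y"
  shows "norm (g x - g y) \<le> L * dM x y"
proof -
  have "norm (g x - g y) \<le> norm (g x) + norm (g y)" by (rule norm_triangle_ineq4)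
  then show ?thesis using assms
    apply (cases "x = 0"; cases "y = 0")
      apply (auto simp: dM_def distrib_left)
    apply (metis add_mono order_trans)
    done
qed

lemma ratios_le:
  fixes g :: "nat \<Rightarrow> 'k::real_normed_field"
  assumes "g 0 = 0" "\<And>n. norm (g n) \<le> L * fact n" "L \<ge> 0"
  shows "\<forall>r\<in>lip_ratios dM g. r \<le> L"
proof
  fix r assume "r \<in> lip_ratios dM g"
  then obtain x y where xy: "x \<noteq> y" "r = norm (g x - g y) / dM x y"
    by (auto simp: lip_ratios_def)
  have "dM x y > 0" using xy dM_pos by auto
  then show "r \<le> L" using dM_bound[OF assms xy(1)] xy(2)
    by (simp add: divide_le_eq mult.commute)
qed

lemma in_Lip0I:
  fixes g :: "nat \<Rightarrow> 'k::real_normed_field"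
  assumes "g 0 = 0" "\<And>n. norm (g n) \<le> L * fact n" "L \<ge> 0"
  shows "g \<in> Lip0 dM 0"
  using ratios_le[OF assms] assms(1) unfolding Lip0_def bdd_above_def by auto

lemma ratio_in:
  fixes g :: "nat \<Rightarrow> 'k::real_normed_field"
  assumes "g 0 = 0" "n \<noteq> 0"
  shows "norm (g n) / fact n \<in> lip_ratios dM g"
proof -
  have "(n, 0) \<in> {(x, y). x \<noteq> y}" using assms by auto
  moreover have "norm (g n) / fact n = (\<lambda>(x, y). norm (g x - g y) / dM x y) (n, 0)"
    using assms by (simp add: dM_def)
  ultimately show ?thesis unfolding lip_ratios_def by blast
qed

lemma Lip0_bound:
  fixes g :: "nat \<Rightarrow> 'k::real_normed_field"
  assumes "g \<in> Lip0 dM 0"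
  shows "g 0 = 0 \<and> (\<exists>L\<ge>0. \<forall>n. norm (g n) \<le> L * fact n)"
proof -
  from assms have g0: "g 0 = 0" and bdd: "bdd_above (lip_ratios dM g)" by (auto simp: Lip0_def)
  then obtain L where L: "\<forall>r\<in>lip_ratios dM g. r \<le> L" by (auto simp: bdd_above_def)
  have "norm (g n) \<le> max L 0 * fact n" for n
  proof (cases "n = 0")
    case True then show ?thesis using g0 by simp
  next
    case False
    then have "norm (g n) / fact n \<le> L" using L ratio_in[of g n, OF g0 False] by blast
    then have "norm (g n) \<le> L * fact n" by (simp add: divide_le_eq)
    also have "\<dots> \<le> max L 0 * fact n" by (intro mult_right_mono) auto
    finally show ?thesis .
  qed
  then show ?thesis using g0 by (intro conjI exI[of _ "max L 0"]) auto
qed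

lemma ball_iff:
  fixes g :: "nat \<Rightarrow> 'k::real_normed_field"
  shows "g \<in> BL \<longleftrightarrow> g 0 = 0 \<and> (\<forall>n. norm (g n) \<le> fact n)"
proof
  assume g: "g \<in> BL"
  then have g0: "g 0 = 0" and bdd: "bdd_above (lip_ratios dM g)" and ln: "lipnorm dM g \<le> 1"
    by (auto simp: Lip0_ball_def Lip0_def)
  have "norm (g n) \<le> fact n" for n
  proof (cases "n = 0")
    case True then show ?thesis using g0 by simp
  next
    case False
    have "norm (g n) / fact n \<le> Sup (insert 0 (lip_ratios dM g))"
      using ratio_in[of g n, OF g0 False] bdd by (intro cSup_upper) auto
    with ln have "norm (g n) / fact n \<le> 1" unfolding lipnorm_def by linarith
    then show ?thesis by (simp add: divide_le_eq)
  qed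
  with g0 show "g 0 = 0 \<and> (\<forall>n. norm (g n) \<le> fact n)" by simp
next
  assume a: "g 0 = 0 \<and> (\<forall>n. norm (g n) \<le> fact n)"
  then have a': "\<And>n. norm (g n) \<le> 1 * fact n" by simp
  have "g \<in> Lip0 dM 0" using in_Lip0I[OF _ a'] a by simp
  moreover have "lipnorm dM g \<le> 1"
    unfolding lipnorm_def using ratios_le[OF _ a'] a by (intro cSup_least) auto
  ultimately show "g \<in> BL" by (simp add: Lip0_ball_def)
qed

lemma zero_in_ball: "(\<lambda>_. 0) \<in> BL"
  by (simp add: ball_iff)

definition bddv :: "((nat \<Rightarrow> 'k::real_normed_field) \<Rightarrow> 'k) \<Rightarrow> bool" where
  "bddv X = bdd_above ((\<lambda>g. norm (X g)) ` BL)"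

lemma bddv_val: "bddv X \<Longrightarrow> g \<in> BL \<Longrightarrow> norm (X g) \<le> dnorm dM 0 X"
  unfolding bddv_def dnorm_def by (rule cSup_upper) auto

lemma dnorm_le:
  assumes "\<And>g. g \<in> BL \<Longrightarrow> norm (X g) \<le> B"
  shows "dnorm dM 0 X \<le> B"
  unfolding dnorm_def using zero_in_ball assms by (intro cSup_least) auto

lemma bddvI: assumes "\<And>g. g \<in> BL \<Longrightarrow> norm (X g) \<le> B" shows "bddv X"
  unfolding bddv_def bdd_above_def using assms by auto

lemma dnorm_nonneg: "bddv X \<Longrightarrow> 0 \<le> dnorm dM 0 X"
  using bddv_val[OF _ zero_in_ball, of X] by (meson norm_ge_zero order_trans)

lemma bddv_diff: "bddv X1 \<Longrightarrow> bddv X2 \<Longrightarrow> bddv (\<lambda>g. X1 g - X2 g)"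
  apply (rule bddvI[of _ "dnorm dM 0 X1 + dnorm dM 0 X2"])
  by (smt (verit) bddv_val norm_triangle_ineq4)

lemma dual_bddv: "\<phi> \<in> Lip0_dual dM 0 \<Longrightarrow> bddv \<phi>"
  by (simp add: Lip0_dual_def bddv_def)

lemma free_dual: "\<phi> \<in> free_space dM 0 \<Longrightarrow> \<phi> \<in> Lip0_dual dM 0"
  by (simp add: free_space_def)

lemma span_dual:
  fixes c :: "nat \<Rightarrow> 'k::real_normed_field"
  assumes "finite S"
  shows "(\<lambda>g. \<Sum>x\<in>S. c x * delta x g) \<in> Lip0_dual dM 0"
  unfolding Lip0_dual_def
proof (intro CollectI conjI ballI allI)
  fix g h a b
  show "(\<Sum>x\<in>S. c x * delta x (\<lambda>x. a * g x + b * h x)) =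
       a * (\<Sum>x\<in>S. c x * delta x g) + b * (\<Sum>x\<in>S. c x * delta x h)"
    by (simp add: delta_def sum_distrib_left sum.distrib algebra_simps)
next
  have "norm (\<Sum>x\<in>S. c x * delta x g) \<le> (\<Sum>x\<in>S. norm (c x) * fact x)" if "g \<in> BL" for g
  proof -
    have "norm (\<Sum>x\<in>S. c x * delta x g) \<le> (\<Sum>x\<in>S. norm (c x * delta x g))" by (rule norm_sum)
    also have "\<dots> \<le> (\<Sum>x\<in>S. norm (c x) * fact x)"
      using that by (intro sum_mono) (simp add: norm_mult delta_def ball_iff mult_left_mono)
    finally show ?thesis .
  qed
  then show "bdd_above ((\<lambda>g. norm (\<Sum>x\<in>S. c x * delta x g)) ` BL)"
    by (intro bdd_aboveI2[where M="\<Sum>x\<in>S. norm (c x) * fact x"]) blast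
qed

lemma dnorm_zero: "dnorm dM 0 (\<lambda>g::nat \<Rightarrow> 'k::real_normed_field. 0::'k) = 0"
proof -
  have "(\<lambda>g::nat\<Rightarrow>'k. norm (0::'k)) ` BL = {0}" using zero_in_ball by auto
  then show ?thesis unfolding dnorm_def by simp
qed

lemma span_free:
  fixes c :: "nat \<Rightarrow> 'k::real_normed_field"
  assumes "finite S"
  shows "(\<lambda>g. \<Sum>x\<in>S. c x * delta x g) \<in> free_space dM 0"
  unfolding free_space_def using span_dual[OF assms] assms
  by (auto simp: delta_span_def dnorm_zero intro!: exI[of _ "\<lambda>g. \<Sum>x\<in>S. c x * delta x g"])

lemma free_diff:
  fixes \<phi> \<psi> :: "(nat \<Rightarrow> 'k::real_normed_field) \<Rightarrow> 'k"
  assumes p: "\<phi> \<in> free_space dM 0" and q: "\<psi> \<in> free_space dM 0"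
  shows "(\<lambda>g. \<phi> g - \<psi> g) \<in> free_space dM 0"
proof -
  have pd: "\<phi> \<in> Lip0_dual dM 0" and qd: "\<psi> \<in> Lip0_dual dM 0" using p q free_dual by auto
  have lin: "(\<lambda>g. \<phi> g - \<psi> g) \<in> Lip0_dual dM 0"
    unfolding Lip0_dual_def
  proof (intro CollectI conjI ballI allI)
    fix g h :: "nat \<Rightarrow> 'k" and a b :: 'k assume "g \<in> Lip0 dM 0" "h \<in> Lip0 dM 0"
    then have "\<phi> (\<lambda>x. a * g x + b * h x) = a * \<phi> g + b * \<phi> h"
      "\<psi> (\<lambda>x. a * g x + b * h x) = a * \<psi> g + b * \<psi> h"
      using pd qd unfolding Lip0_dual_def by blast+
    then show "\<phi> (\<lambda>x. a * g x + b * h x) - \<psi> (\<lambda>x. a * g x + b * h x) =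
           a * (\<phi> g - \<psi> g) + b * (\<phi> h - \<psi> h)" by (simp add: algebra_simps)
  next
    show "bdd_above ((\<lambda>g. norm (\<phi> g - \<psi> g)) ` BL)"
      using bddv_diff[OF dual_bddv[OF pd] dual_bddv[OF qd]] by (simp add: bddv_def)
  qed
  have "\<exists>\<psi>'\<in>delta_span. dnorm dM 0 (\<lambda>g. (\<phi> g - \<psi> g) - \<psi>' g) < e" if e: "e > 0" for e
  proof -
    have "\<forall>e>0. \<exists>\<psi>'\<in>delta_span. dnorm dM 0 (\<lambda>g. \<phi> g - \<psi>' g) < e"
      using p unfolding free_space_def by blast
    then obtain p' where p': "p' \<in> delta_span" "dnorm dM 0 (\<lambda>g. \<phi> g - p' g) < e/2"
      using e half_gt_zero by blast
    have "\<forall>e>0. \<exists>\<psi>'\<in>delta_span. dnorm dM 0 (\<lambda>g. \<psi> g - \<psi>' g) < e"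
      using q unfolding free_space_def by blast
    then obtain q' where q': "q' \<in> delta_span" "dnorm dM 0 (\<lambda>g. \<psi> g - q' g) < e/2"
      using e half_gt_zero by blast
    obtain S1 c1 where s1: "finite S1" "p' = (\<lambda>g. \<Sum>x\<in>S1. c1 x * delta x g)"
      using p'(1) unfolding delta_span_def by auto
    obtain S2 c2 where s2: "finite S2" "q' = (\<lambda>g. \<Sum>x\<in>S2. c2 x * delta x g)"
      using q'(1) unfolding delta_span_def by auto
    define c where "c x = (if x \<in> S1 then c1 x else 0) - (if x \<in> S2 then c2 x else 0)" for x
    have eq: "(\<lambda>g. p' g - q' g) = (\<lambda>g. \<Sum>x\<in>S1 \<union> S2. c x * delta x g)"
    proof
      fix g
      have a: "(\<Sum>x\<in>S1. c1 x * delta x g) = (\<Sum>x\<in>S1 \<union> S2. (if x \<in> S1 then c1 x else 0) * delta x g)"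
        using s1 s2 by (intro sum.mono_neutral_cong_left) auto
      have b: "(\<Sum>x\<in>S2. c2 x * delta x g) = (\<Sum>x\<in>S1 \<union> S2. (if x \<in> S2 then c2 x else 0) * delta x g)"
        using s1 s2 by (intro sum.mono_neutral_cong_left) auto
      show "p' g - q' g = (\<Sum>x\<in>S1 \<union> S2. c x * delta x g)"
        unfolding s1(2) s2(2) a b c_def by (simp add: sum_subtractf algebra_simps)
    qed
    have inspan: "(\<lambda>g. p' g - q' g) \<in> delta_span"
      unfolding eq delta_span_def using s1 s2 by blast
    have pd': "p' \<in> Lip0_dual dM 0" using s1 span_dual by auto
    have qd': "q' \<in> Lip0_dual dM 0" using s2 span_dual by auto
    have b1: "bddv (\<lambda>g. \<phi> g - p' g)" by (intro bddv_diff dual_bddv pd pd')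
    have b2: "bddv (\<lambda>g. \<psi> g - q' g)" by (intro bddv_diff dual_bddv qd qd')
    have "dnorm dM 0 (\<lambda>g. (\<phi> g - \<psi> g) - (p' g - q' g)) \<le>
          dnorm dM 0 (\<lambda>g. \<phi> g - p' g) + dnorm dM 0 (\<lambda>g. \<psi> g - q' g)"
    proof (rule dnorm_le)
      fix g :: "nat \<Rightarrow> 'k" assume g: "g \<in> BL"
      have "norm ((\<phi> g - \<psi> g) - (p' g - q' g)) \<le> norm (\<phi> g - p' g) + norm (\<psi> g - q' g)"
      proof -
        have "(\<phi> g - \<psi> g) - (p' g - q' g) = (\<phi> g - p' g) - (\<psi> g - q' g)" by (simp add: algebra_simps)
        then show ?thesis by (metis norm_triangle_ineq4)
      qed
      then show "norm ((\<phi> g - \<psi> g) - (p' g - q' g)) \<le> dnorm dM 0 (\<lambda>g. \<phi> g - p' g) + dnorm dM 0 (\<lambda>g. \<psi> g - q' g)"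
        using bddv_val[OF b1 g] bddv_val[OF b2 g] by simp
    qed
    then show ?thesis using p'(2) q'(2) inspan by (intro bexI[of _ "\<lambda>g. p' g - q' g"]) auto
  qed
  then show ?thesis using lin unfolding free_space_def by auto
qed


lemma delta_eq: "(delta x :: (nat \<Rightarrow> 'k::real_normed_field) \<Rightarrow> 'k) = (\<lambda>g. \<Sum>y\<in>{x}. 1 * delta y g)"
  by (simp add: delta_def)

lemma delta_free: "(delta x :: (nat \<Rightarrow> 'k::real_normed_field) \<Rightarrow> 'k) \<in> free_space dM 0"
  by (subst delta_eq) (rule span_free, simp)

lemma T_span:
  fixes T :: "((nat \<Rightarrow> 'k::real_normed_field) \<Rightarrow> 'k) \<Rightarrow> ((nat \<Rightarrow> 'k) \<Rightarrow> 'k)"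
  assumes lin: "is_linearization dM 0 fM T" and S: "finite S"
  shows "\<forall>g\<in>Lip0 dM 0. T (\<lambda>g. \<Sum>x\<in>S. c x * delta x g) g = (\<Sum>x\<in>S. c x * g (fM x))"
  using S
proof -
  have L2: "\<forall>\<phi>\<in>free_space dM 0. \<forall>\<psi>\<in>free_space dM 0. \<forall>a b.
            dual_eq dM 0 (T (\<lambda>g. a * \<phi> g + b * \<psi> g)) (\<lambda>g. a * T \<phi> g + b * T \<psi> g)"
    using lin unfolding is_linearization_def by blast
  show ?thesis using S
proof (induction S rule: finite_induct)
  case empty
  have "dual_eq dM 0 (T (\<lambda>g. 0 * delta 0 g + 0 * delta 0 g)) (\<lambda>g. 0 * T (delta 0) g + 0 * T (delta 0) g)"
    using L2[rule_format, OF delta_free[of 0] delta_free[of 0]] by blast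
  then show ?case by (simp add: dual_eq_def)
next
  case (insert x S)
  have eq: "(\<lambda>g. \<Sum>y\<in>insert x S. c y * delta y g) = (\<lambda>g. 1 * (\<Sum>y\<in>S. c y * delta y g) + c x * delta x g)"
    using insert by (simp add: add.commute)
  have "dual_eq dM 0 (T (\<lambda>g. 1 * (\<Sum>y\<in>S. c y * delta y g) + c x * delta x g))
          (\<lambda>g. 1 * T (\<lambda>g. \<Sum>y\<in>S. c y * delta y g) g + c x * T (delta x) g)"
    using L2[rule_format, OF span_free[OF insert(1), of c] delta_free[of x]] by blast
  moreover have "dual_eq dM 0 (T (delta x)) (delta (fM x))"
    using lin unfolding is_linearization_def by blast
  ultimately show ?case using insert(1,2,3) unfolding eq dual_eq_def
    by (simp add: delta_def add.commute)
qed
qed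


lemma diag_conv:
  fixes \<alpha> :: "nat \<Rightarrow> nat \<Rightarrow> 'k::{real_normed_vector, heine_borel}"
  assumes bd: "\<And>k m. norm (\<alpha> k m) \<le> B m"
  shows "\<exists>r \<beta>. strict_mono r \<and> (\<forall>m. (\<lambda>k. \<alpha> (r k) m) \<longlonglongrightarrow> \<beta> m)"
proof -
  interpret subseqs "\<lambda>m s. \<exists>l. (\<lambda>k. \<alpha> (s k) m) \<longlonglongrightarrow> l"
  proof unfold_locales
    fix m and s :: "nat \<Rightarrow> nat" assume "strict_mono s"
    have "bounded (range (\<lambda>k. \<alpha> (s k) m))" using bd unfolding bounded_iff by blast
    then obtain l r where "strict_mono r" "((\<lambda>k. \<alpha> (s k) m) \<circ> r) \<longlonglongrightarrow> l"
      using bounded_imp_convergent_subsequence by blast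
    then show "\<exists>r'. strict_mono r' \<and> (\<exists>l. (\<lambda>k. \<alpha> ((s \<circ> r') k) m) \<longlonglongrightarrow> l)"
      by (auto simp: o_def)
  qed
  have "\<exists>l. (\<lambda>k. \<alpha> (diagseq k) m) \<longlonglongrightarrow> l" for m
  proof -
    obtain l where "(\<lambda>i. \<alpha> ((diagseq o (+) (Suc m)) i) m) \<longlonglongrightarrow> l"
    proof (atomize_elim, rule diagseq_holds)
      fix r s n
      assume "strict_mono (r :: nat \<Rightarrow> nat)"
      assume "\<exists>l. (\<lambda>k. \<alpha> (s k) n) \<longlonglongrightarrow> l"
      then obtain l where "((\<lambda>k. \<alpha> k n) o s) \<longlonglongrightarrow> l" by (auto simp: o_def)
      hence "((\<lambda>k. \<alpha> k n) o s o r) \<longlonglongrightarrow> l" using \<open>strict_mono r\<close>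
        by (rule LIMSEQ_subseq_LIMSEQ)
      thus "\<exists>l. (\<lambda>k. \<alpha> ((s \<circ> r) k) n) \<longlonglongrightarrow> l" by (auto simp add: o_def)
    qed
    hence "(\<lambda>i. \<alpha> (diagseq (i + Suc m)) m) \<longlonglongrightarrow> l" by (simp add: ac_simps)
    hence "(\<lambda>i. \<alpha> (diagseq i) m) \<longlonglongrightarrow> l" by (rule LIMSEQ_offset)
    thus ?thesis ..
  qed
  then have "\<forall>m. \<exists>l. (\<lambda>k. \<alpha> (diagseq k) m) \<longlonglongrightarrow> l" by blast
  then obtain \<beta> where "\<forall>m. (\<lambda>k. \<alpha> (diagseq k) m) \<longlonglongrightarrow> \<beta> m" by (rule choice[THEN exE])
  then show ?thesis using subseq_diagseq by (intro exI[of _ diagseq] exI[of _ \<beta>]) simp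
qed

lemma tail_le:
  fixes f :: "nat \<Rightarrow> real"
  assumes "summable f" "\<And>n. 0 \<le> f n"
  shows "(\<Sum>i. f (i + N)) \<le> suminf f"
  using suminf_split_initial_segment[OF assms(1), of N] sum_nonneg[of "{..<N}" f] assms(2) by simp

lemma tail_bound:
  fixes t A B :: "nat \<Rightarrow> real"
  assumes st: "summable t" and sA: "summable A" and sB: "summable B"
    and t0: "\<And>m. 0 \<le> t m" and A0: "\<And>m. 0 \<le> A m" and B0: "\<And>m. 0 \<le> B m"
    and tAB: "\<And>m. t m * (real m + 1) \<le> A m + B m"
    and SA: "suminf A \<le> 2" and SB: "suminf B \<le> 2"
  shows "(\<Sum>i. t (i + N)) \<le> 4 / (real N + 1)"
proof -
  have le: "t (i + N) \<le> (A (i + N) + B (i + N)) / (real N + 1)" for i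
  proof -
    have "t (i + N) * (real N + 1) \<le> t (i + N) * (real (i + N) + 1)"
      using t0 by (intro mult_left_mono) auto
    also have "\<dots> \<le> A (i + N) + B (i + N)" by (rule tAB)
    finally show ?thesis by (simp add: le_divide_eq add_pos_nonneg)
  qed
  have sAB: "summable (\<lambda>i. A (i + N) + B (i + N))"
    using summable_add[OF summable_ignore_initial_segment[OF sA] summable_ignore_initial_segment[OF sB]] .
  have "(\<Sum>i. t (i + N)) \<le> (\<Sum>i. (A (i + N) + B (i + N)) / (real N + 1))"
    by (intro suminf_le le summable_ignore_initial_segment st summable_divide sAB)
  also have "\<dots> = ((\<Sum>i. A (i + N)) + (\<Sum>i. B (i + N))) / (real N + 1)"
    by (simp add: suminf_divide[OF sAB] suminf_add[OF summable_ignore_initial_segment[OF sA] summable_ignore_initial_segment[OF sB]])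
  also have "\<dots> \<le> (2 + 2) / (real N + 1)"
    using tail_le[OF sA A0, of N] tail_le[OF sB B0, of N] SA SB
    by (intro divide_right_mono) auto
  finally show ?thesis by simp
qed



theorem compact_gen:
  fixes T :: "((nat \<Rightarrow> 'k::{real_normed_field,banach,heine_borel}) \<Rightarrow> 'k) \<Rightarrow> ((nat \<Rightarrow> 'k) \<Rightarrow> 'k)"
  assumes sgn: "\<And>a::'k. \<exists>u. norm u \<le> 1 \<and> u * a = of_real (norm a)"
    and lin: "is_linearization dM 0 fM T"
  shows "compact_op dM 0 T"
  unfolding compact_op_def
proof (intro allI impI)
  fix s :: "nat \<Rightarrow> ((nat \<Rightarrow> 'k) \<Rightarrow> 'k)"
  assume s: "\<forall>n. s n \<in> free_space dM 0 \<and> dnorm dM 0 (s n) \<le> 1"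
  have "\<forall>a::'k. \<exists>u. norm u \<le> 1 \<and> u * a = of_real (norm a)" using sgn by blast
  then have "\<exists>sg::'k\<Rightarrow>'k. \<forall>a. norm (sg a) \<le> 1 \<and> sg a * a = of_real (norm a)" by (rule choice)
  then obtain sg :: "'k \<Rightarrow> 'k" where sg0: "\<forall>a. norm (sg a) \<le> 1 \<and> sg a * a = of_real (norm a)" by blast
  then have sg: "\<And>a. norm (sg a) \<le> 1" "\<And>a. sg a * a = of_real (norm a)" by auto
  obtain C where C: "\<forall>\<phi>\<in>free_space dM 0. dnorm dM 0 (T \<phi>) \<le> C * dnorm dM 0 \<phi>"
    using lin unfolding is_linearization_def by blast
  have L2: "\<forall>\<phi>\<in>free_space dM 0. \<forall>\<psi>\<in>free_space dM 0. \<forall>a b.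
            dual_eq dM 0 (T (\<lambda>g. a * \<phi> g + b * \<psi> g)) (\<lambda>g. a * T \<phi> g + b * T \<psi> g)"
    using lin unfolding is_linearization_def by blast
  have Tfree: "\<forall>\<phi>\<in>free_space dM 0. T \<phi> \<in> free_space dM 0"
    using lin unfolding is_linearization_def by blast
  have "\<forall>k. \<exists>S c. finite S \<and> dnorm dM 0 (\<lambda>g. s k g - (\<Sum>x\<in>S. c x * delta x g)) < inverse (real (Suc k))"
  proof
    fix k
    have "\<forall>e>0. \<exists>\<psi>\<in>delta_span. dnorm dM 0 (\<lambda>g. s k g - \<psi> g) < e"
      using s unfolding free_space_def by blast
    then have "\<exists>\<psi>\<in>delta_span. dnorm dM 0 (\<lambda>g. s k g - \<psi> g) < inverse (real (Suc k))" by simp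
    then show "\<exists>S c. finite S \<and> dnorm dM 0 (\<lambda>g. s k g - (\<Sum>x\<in>S. c x * delta x g)) < inverse (real (Suc k))"
      unfolding delta_span_def by auto
  qed
  then have "\<exists>S. \<forall>k. \<exists>c. finite (S k) \<and> dnorm dM 0 (\<lambda>g. s k g - (\<Sum>x\<in>S k. c x * delta x g)) < inverse (real (Suc k))"
    by (rule choice)
  then obtain S where "\<forall>k. \<exists>c. finite (S k) \<and> dnorm dM 0 (\<lambda>g. s k g - (\<Sum>x\<in>S k. c x * delta x g)) < inverse (real (Suc k))"
    by blast
  then have "\<exists>c. \<forall>k. finite (S k) \<and> dnorm dM 0 (\<lambda>g. s k g - (\<Sum>x\<in>S k. c k x * delta x g)) < inverse (real (Suc k))"
    by (rule choice)
  then obtain c where "\<forall>k. finite (S k) \<and> dnorm dM 0 (\<lambda>g. s k g - (\<Sum>x\<in>S k. c k x * delta x g)) < inverse (real (Suc k))"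
    by blast
  then have S: "\<And>k. finite (S k)"
    and Sc: "\<And>k. dnorm dM 0 (\<lambda>g. s k g - (\<Sum>x\<in>S k. c k x * delta x g)) < inverse (real (Suc k))"
    by auto
  define \<psi> where "\<psi> k = (\<lambda>g. \<Sum>x\<in>S k. c k x * delta x g)" for k
  have \<psi>free: "\<psi> k \<in> free_space dM 0" for k unfolding \<psi>_def by (rule span_free[OF S])
  have sdual: "s k \<in> Lip0_dual dM 0" for k using s free_dual by blast
  have \<psi>dual: "\<psi> k \<in> Lip0_dual dM 0" for k using \<psi>free free_dual by blast
  have dfree: "(\<lambda>g. s k g - \<psi> k g) \<in> free_space dM 0" for k
    using free_diff s \<psi>free by blast
  have dsmall: "dnorm dM 0 (\<lambda>g. s k g - \<psi> k g) < inverse (real (Suc k))" for k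
    using Sc unfolding \<psi>_def .
  have dnn: "0 \<le> dnorm dM 0 (\<lambda>g. s k g - \<psi> k g)" for k
    using dnorm_nonneg[OF dual_bddv[OF free_dual[OF dfree]]] .
  have \<psi>bd: "norm (\<psi> k g) \<le> 2" if g: "g \<in> BL" for k g
  proof -
    have "norm (\<psi> k g) \<le> norm (s k g) + norm (s k g - \<psi> k g)"
      by (metis add_diff_cancel_left' diff_add_cancel norm_triangle_ineq4 add.commute norm_minus_commute
          norm_triangle_sub)
    also have "\<dots> \<le> 1 + 1"
    proof (intro add_mono)
      show "norm (s k g) \<le> 1" using bddv_val[OF dual_bddv[OF sdual] g] s by (meson order_trans)
      have "norm (s k g - \<psi> k g) \<le> dnorm dM 0 (\<lambda>g. s k g - \<psi> k g)"
        using bddv_val[OF dual_bddv[OF free_dual[OF dfree]] g] by simp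
      also have "\<dots> \<le> 1" using dsmall[of k]
        by (smt (verit) inverse_le_1_iff of_nat_0_le_iff of_nat_Suc)
      finally show "norm (s k g - \<psi> k g) \<le> 1" .
    qed
    finally show ?thesis by simp
  qed
  define \<alpha> where "\<alpha> k m = (if Suc m \<in> S k then c k (Suc m) else 0)" for k m
  have T\<psi>: "T (\<psi> k) g = (\<Sum>m. \<alpha> k m * g m)" if g: "g \<in> Lip0 dM 0" for k g
  proof -
    have g0: "g 0 = 0" using Lip0_bound[OF g] by blast
    define M where "M = Suc -` S k"
    have fM: "finite M" unfolding M_def by (intro finite_vimageI S) simp
    have "T (\<psi> k) g = (\<Sum>x\<in>S k. c k x * g (fM x))"
      using T_span[OF lin S[of k], where c="c k"] g unfolding \<psi>_def by blast
    also have "\<dots> = (\<Sum>x\<in>Suc ` M. c k x * g (fM x))"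
    proof (rule sum.mono_neutral_cong_right)
      show "\<forall>x\<in>S k - Suc ` M. c k x * g (fM x) = 0"
      proof
        fix x assume x: "x \<in> S k - Suc ` M"
        then have "x = 0" unfolding M_def by (cases x) auto
        then show "c k x * g (fM x) = 0" by (simp add: fM_def g0)
      qed
    qed (auto simp: S M_def)
    also have "\<dots> = (\<Sum>m\<in>M. c k (Suc m) * g m)"
      by (subst sum.reindex) (auto simp: fM_def)
    also have "\<dots> = (\<Sum>m\<in>M. \<alpha> k m * g m)"
      by (intro sum.cong) (auto simp: \<alpha>_def M_def)
    also have "\<dots> = (\<Sum>m. \<alpha> k m * g m)"
      by (rule suminf_finite[symmetric, OF fM]) (auto simp: \<alpha>_def M_def)
    finally show ?thesis .
  qed
  have \<alpha>sum: "(\<Sum>m<N. norm (\<alpha> k m) * fact (Suc m)) \<le> 2" for k N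
  proof -
    define f where "f x = (if x \<in> S k \<and> x \<noteq> 0 then norm (c k x) * fact x else 0)" for x :: nat
    have f0: "0 \<le> f x" for x unfolding f_def by auto
    define h :: "nat \<Rightarrow> 'k" where "h x = (if x \<in> S k \<and> x \<noteq> 0 then sg (c k x) * of_real (fact x) else 0)" for x
    have hB: "h \<in> BL"
      unfolding ball_iff
    proof (intro conjI allI)
      show "h 0 = 0" by (simp add: h_def)
      fix n show "norm (h n) \<le> fact n"
        using sg(1)[of "c k n"] unfolding h_def
        by (auto simp: norm_mult intro!: mult_left_le_one_le)
    qed
    have "\<psi> k h = (\<Sum>x\<in>S k. of_real (f x))"
      unfolding \<psi>_def delta_def
    proof (intro sum.cong refl)
      fix x assume "x \<in> S k"
      show "c k x * h x = of_real (f x)"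
      proof (cases "x = 0")
        case False
        have "c k x * h x = (sg (c k x) * c k x) * of_real (fact x)"
          using False \<open>x \<in> S k\<close> by (simp add: h_def algebra_simps)
        also have "\<dots> = of_real (f x)"
          using False \<open>x \<in> S k\<close> by (simp add: sg(2) f_def)
        finally show ?thesis .
      qed (simp add: h_def f_def)
    qed
    also have "\<dots> = of_real (\<Sum>x\<in>S k. f x)" by simp
    finally have eqh: "\<psi> k h = of_real (\<Sum>x\<in>S k. f x)" .
    have "norm (\<psi> k h) = \<bar>\<Sum>x\<in>S k. f x\<bar>" unfolding eqh by (simp only: norm_of_real)
    then have "norm (\<psi> k h) = (\<Sum>x\<in>S k. f x)" using f0 by (simp add: sum_nonneg)
    then have R: "(\<Sum>x\<in>S k. f x) \<le> 2" using \<psi>bd[OF hB, of k] by simp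
    have "(\<Sum>m<N. norm (\<alpha> k m) * fact (Suc m)) = (\<Sum>m<N. f (Suc m))"
      by (intro sum.cong) (auto simp: \<alpha>_def f_def)
    also have "\<dots> = (\<Sum>x\<in>Suc ` {..<N}. f x)" by (subst sum.reindex) auto
    also have "\<dots> \<le> (\<Sum>x\<in>Suc ` {..<N} \<union> S k. f x)"
      using S f0 by (intro sum_mono2) auto
    also have "\<dots> = (\<Sum>x\<in>S k. f x)"
      using S by (intro sum.mono_neutral_right) (auto simp: f_def)
    finally show ?thesis using R by linarith
  qed
  have \<alpha>bd: "norm (\<alpha> k m) \<le> 2 / fact (Suc m)" for k m
  proof -
    have "norm (\<alpha> k m) * fact (Suc m) \<le> (\<Sum>j<Suc m. norm (\<alpha> k j) * fact (Suc j))"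
      by (intro member_le_sum) auto
    then have "norm (\<alpha> k m) * fact (Suc m) \<le> 2" using \<alpha>sum[where k=k and N="Suc m"] by linarith
    moreover have "(0::real) < fact (Suc m)" by (rule fact_gt_zero)
    ultimately show ?thesis by (simp add: le_divide_eq del: fact_Suc)
  qed
  obtain r \<beta> where r: "strict_mono r" and conv: "\<And>m. (\<lambda>k. \<alpha> (r k) m) \<longlonglongrightarrow> \<beta> m"
    using diag_conv[of \<alpha> "\<lambda>m. 2 / fact (Suc m)", OF \<alpha>bd] by blast
  define w where "w m = norm (\<beta> m) * fact (Suc m)" for m
  have w0: "0 \<le> w m" for m unfolding w_def by simp
  have \<beta>sum: "(\<Sum>m<N. w m) \<le> 2" for N
  proof (rule LIMSEQ_le_const2)
    show "(\<lambda>k. \<Sum>m<N. norm (\<alpha> (r k) m) * fact (Suc m)) \<longlonglongrightarrow> (\<Sum>m<N. w m)"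
      unfolding w_def by (intro tendsto_intros conv)
    show "\<exists>N'. \<forall>n\<ge>N'. (\<Sum>m<N. norm (\<alpha> (r n) m) * fact (Suc m)) \<le> 2" using \<alpha>sum by blast
  qed
  have wsum: "summable w" by (rule summableI_nonneg_bounded[OF w0 \<beta>sum])
  have wle: "suminf w \<le> 2" by (rule suminf_le_const[OF wsum \<beta>sum])
  have Asum: "summable (\<lambda>m. norm (\<alpha> k m) * fact (Suc m))" for k
    by (rule summableI_nonneg_bounded[OF _ \<alpha>sum]) simp
  have Ale: "(\<Sum>m. norm (\<alpha> k m) * fact (Suc m)) \<le> 2" for k
    by (rule suminf_le_const[OF Asum \<alpha>sum])
  have factle: "fact m \<le> (fact (Suc m) :: real)" for m by (rule fact_mono) auto
  have \<beta>norm: "summable (\<lambda>m. norm (\<beta> m * g m))" if g: "g \<in> Lip0 dM 0" for g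
  proof -
    obtain L where L: "L \<ge> 0" "\<And>n. norm (g n) \<le> L * fact n" using Lip0_bound[OF g] by blast
    show ?thesis
    proof (rule summable_comparison_test'[of "\<lambda>m. L * w m" 0])
      show "summable (\<lambda>m. L * w m)" using wsum by (rule summable_mult)
      fix m
      have "norm (norm (\<beta> m * g m)) \<le> norm (\<beta> m) * (L * fact m)"
        by (simp add: norm_mult mult_left_mono L(2))
      also have "\<dots> \<le> L * w m" unfolding w_def
        using factle[of m] L(1) by (simp add: mult_left_mono mult.left_commute)
      finally show "norm (norm (\<beta> m * g m)) \<le> L * w m" .
    qed
  qed
  have \<alpha>norm: "summable (\<lambda>m. norm (\<alpha> k m * g m))" if g: "g \<in> Lip0 dM 0" for k g
  proof -
    obtain L where L: "L \<ge> 0" "\<And>n. norm (g n) \<le> L * fact n" using Lip0_bound[OF g] by blast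
    show ?thesis
    proof (rule summable_comparison_test'[of "\<lambda>m. L * (norm (\<alpha> k m) * fact (Suc m))" 0])
      show "summable (\<lambda>m. L * (norm (\<alpha> k m) * fact (Suc m)))" using Asum by (rule summable_mult)
      fix m
      have "norm (norm (\<alpha> k m * g m)) \<le> norm (\<alpha> k m) * (L * fact m)"
        by (simp add: norm_mult mult_left_mono L(2))
      also have "\<dots> = L * (norm (\<alpha> k m) * fact m)" by (simp add: algebra_simps)
      also have "\<dots> \<le> L * (norm (\<alpha> k m) * fact (Suc m))"
        by (intro mult_left_mono factle norm_ge_zero L(1))
      finally show "norm (norm (\<alpha> k m * g m)) \<le> L * (norm (\<alpha> k m) * fact (Suc m))" .
    qed
  qed
  define X where "X g = (\<Sum>m. \<beta> m * g m)" for g :: "nat \<Rightarrow> 'k"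
  have XB: "norm (X g) \<le> 2" if g: "g \<in> BL" for g
  proof -
    have gb: "norm (g n) \<le> fact n" for n using g ball_iff by blast
    have "norm (X g) \<le> suminf w" unfolding X_def
    proof (rule norm_suminf_le[OF _ wsum])
      fix m show "norm (\<beta> m * g m) \<le> w m" unfolding w_def
        using gb[of m] factle[of m] by (simp add: norm_mult mult_left_mono order_trans)
    qed
    then show ?thesis using wle by simp
  qed
  have Xfree: "X \<in> free_space dM 0"
  proof -
    have Xdual: "X \<in> Lip0_dual dM 0"
      unfolding Lip0_dual_def
    proof (intro CollectI conjI ballI allI)
      fix g h :: "nat \<Rightarrow> 'k" and a b :: 'k
      assume g: "g \<in> Lip0 dM 0" and h: "h \<in> Lip0 dM 0"
      have sg': "summable (\<lambda>m. \<beta> m * g m)" by (rule summable_norm_cancel[OF \<beta>norm[OF g]])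
      have sh': "summable (\<lambda>m. \<beta> m * h m)" by (rule summable_norm_cancel[OF \<beta>norm[OF h]])
      have "X (\<lambda>x. a * g x + b * h x) = (\<Sum>m. a * (\<beta> m * g m) + b * (\<beta> m * h m))"
        unfolding X_def by (simp add: algebra_simps)
      also have "\<dots> = (\<Sum>m. a * (\<beta> m * g m)) + (\<Sum>m. b * (\<beta> m * h m))"
        by (rule suminf_add[symmetric]) (intro summable_mult sg' sh')+
      also have "\<dots> = a * X g + b * X h"
        unfolding X_def by (simp add: suminf_mult sg' sh')
      finally show "X (\<lambda>x. a * g x + b * h x) = a * X g + b * X h" .
    next
      show "bdd_above ((\<lambda>g. norm (X g)) ` BL)"
        by (intro bdd_aboveI2[where M=2] XB)
    qed
    have "\<exists>\<psi>'\<in>delta_span. dnorm dM 0 (\<lambda>g. X g - \<psi>' g) < e" if e: "e > 0" for e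
    proof -
      obtain N where N: "norm (\<Sum>i. w (i + N)) < e"
        using suminf_exist_split[OF e wsum] by blast
      have inspan: "(\<lambda>g. \<Sum>x\<in>{..<N}. \<beta> x * delta x g) \<in> delta_span"
        unfolding delta_span_def by blast
      have "dnorm dM 0 (\<lambda>g. X g - (\<Sum>x\<in>{..<N}. \<beta> x * delta x g)) \<le> (\<Sum>i. w (i + N))"
      proof (rule dnorm_le)
        fix g :: "nat \<Rightarrow> 'k" assume g: "g \<in> BL"
        have gL: "g \<in> Lip0 dM 0" using g by (simp add: Lip0_ball_def)
        have gb: "norm (g n) \<le> fact n" for n using g ball_iff by blast
        have sg': "summable (\<lambda>m. \<beta> m * g m)" by (rule summable_norm_cancel[OF \<beta>norm[OF gL]])
        have "X g - (\<Sum>x\<in>{..<N}. \<beta> x * delta x g) = (\<Sum>i. \<beta> (i + N) * g (i + N))"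
          unfolding X_def delta_def using suminf_split_initial_segment[OF sg', of N] by simp
        also have "norm \<dots> \<le> (\<Sum>i. w (i + N))"
        proof (rule norm_suminf_le[OF _ summable_ignore_initial_segment[OF wsum]])
          fix i show "norm (\<beta> (i + N) * g (i + N)) \<le> w (i + N)" unfolding w_def
            using gb[of "i + N"] factle[of "i + N"] by (simp add: norm_mult mult_left_mono order_trans)
        qed
        finally show "norm (X g - (\<Sum>x\<in>{..<N}. \<beta> x * delta x g)) \<le> (\<Sum>i. w (i + N))" .
      qed
      moreover have "(\<Sum>i. w (i + N)) < e" using N by simp
      ultimately have "dnorm dM 0 (\<lambda>g. X g - (\<lambda>g. \<Sum>x\<in>{..<N}. \<beta> x * delta x g) g) < e" by simp
      then show ?thesis using inspan by (rule rev_bexI[rotated])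
    qed
    then show ?thesis using Xdual unfolding free_space_def by auto
  qed
  define E where "E k = (\<Sum>m. norm (\<alpha> k m - \<beta> m) * fact m)" for k
  have tsum: "summable (\<lambda>m. norm (\<alpha> k m - \<beta> m) * fact m)" for k
  proof (rule summable_comparison_test'[of "\<lambda>m. norm (\<alpha> k m) * fact (Suc m) + w m" 0])
    show "summable (\<lambda>m. norm (\<alpha> k m) * fact (Suc m) + w m)" by (intro summable_add Asum wsum)
    fix m
    have "norm (norm (\<alpha> k m - \<beta> m) * fact m) = norm (\<alpha> k m - \<beta> m) * fact m" by simp
    also have "\<dots> \<le> (norm (\<alpha> k m) + norm (\<beta> m)) * fact m"
      by (intro mult_right_mono norm_triangle_ineq4) auto
    also have "\<dots> \<le> (norm (\<alpha> k m) + norm (\<beta> m)) * fact (Suc m)"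
      by (intro mult_left_mono factle) auto
    also have "\<dots> = norm (\<alpha> k m) * fact (Suc m) + w m" by (simp add: w_def algebra_simps)
    finally show "norm (norm (\<alpha> k m - \<beta> m) * fact m) \<le> norm (\<alpha> k m) * fact (Suc m) + w m" .
  qed
  have TX: "norm (T (\<psi> k) g - X g) \<le> E k" if g: "g \<in> BL" for k g
  proof -
    have gL: "g \<in> Lip0 dM 0" using g by (simp add: Lip0_ball_def)
    have gb: "norm (g n) \<le> fact n" for n using g ball_iff by blast
    have "T (\<psi> k) g - X g = (\<Sum>m. (\<alpha> k m - \<beta> m) * g m)"
      unfolding T\<psi>[OF gL] X_def
      by (subst suminf_diff[OF summable_norm_cancel[OF \<alpha>norm[OF gL]] summable_norm_cancel[OF \<beta>norm[OF gL]]])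
         (simp add: algebra_simps)
    also have "norm \<dots> \<le> E k" unfolding E_def
    proof (rule norm_suminf_le[OF _ tsum])
      fix m show "norm ((\<alpha> k m - \<beta> m) * g m) \<le> norm (\<alpha> k m - \<beta> m) * fact m"
        using gb[of m] by (simp add: norm_mult mult_left_mono)
    qed
    finally show ?thesis .
  qed
  have Econv: "(\<lambda>k. E (r k)) \<longlonglongrightarrow> 0"
  proof (rule LIMSEQ_I)
    fix \<epsilon> :: real assume \<epsilon>: "\<epsilon> > 0"
    obtain N :: nat where N: "8 / \<epsilon> < real N" using reals_Archimedean2 by blast
    have Npos: "real N > 0" using N \<epsilon> by (smt (verit) divide_pos_pos)
    have tailN: "4 / (real N + 1) < \<epsilon> / 2"
    proof -
      have "4 / (real N + 1) < 4 / real N" using Npos by (intro divide_strict_left_mono) auto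
      also have "4 / real N < \<epsilon> / 2" using N Npos \<epsilon> by (simp add: divide_less_eq field_simps)
      finally show ?thesis .
    qed
    have "(\<lambda>k. \<Sum>m<N. norm (\<alpha> (r k) m - \<beta> m) * fact m) \<longlonglongrightarrow> (\<Sum>m<N. norm (\<beta> m - \<beta> m) * fact m)"
      by (intro tendsto_intros conv)
    then have "(\<lambda>k. \<Sum>m<N. norm (\<alpha> (r k) m - \<beta> m) * fact m) \<longlonglongrightarrow> 0" by simp
    then obtain k0 where k0: "\<forall>k\<ge>k0. norm ((\<Sum>m<N. norm (\<alpha> (r k) m - \<beta> m) * fact m) - 0) < \<epsilon> / 2"
      using LIMSEQ_D[of _ 0 "\<epsilon>/2"] \<epsilon> by (meson half_gt_zero)
    show "\<exists>no. \<forall>n\<ge>no. norm (E (r n) - 0) < \<epsilon>"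
    proof (intro exI allI impI)
      fix k assume "k \<ge> k0"
      then have "norm ((\<Sum>m<N. norm (\<alpha> (r k) m - \<beta> m) * fact m) - 0) < \<epsilon> / 2" using k0 by blast
      then have "\<bar>\<Sum>m<N. norm (\<alpha> (r k) m - \<beta> m) * fact m\<bar> < \<epsilon> / 2" by (simp only: diff_zero real_norm_def)
      then have H: "(\<Sum>m<N. norm (\<alpha> (r k) m - \<beta> m) * fact m) < \<epsilon> / 2" by (meson abs_ge_self order_le_less_trans)
      have tail: "(\<Sum>i. norm (\<alpha> (r k) (i + N) - \<beta> (i + N)) * fact (i + N)) \<le> 4 / (real N + 1)"
      proof (rule tail_bound[OF tsum Asum wsum _ _ w0 _ Ale wle])
        fix m
        show "0 \<le> norm (\<alpha> (r k) m - \<beta> m) * fact m" by simp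
        show "0 \<le> norm (\<alpha> (r k) m) * fact (Suc m)" by simp
        have "norm (\<alpha> (r k) m - \<beta> m) * fact m * (real m + 1) = norm (\<alpha> (r k) m - \<beta> m) * fact (Suc m)"
          by (simp add: algebra_simps)
        also have "\<dots> \<le> (norm (\<alpha> (r k) m) + norm (\<beta> m)) * fact (Suc m)"
          by (intro mult_right_mono norm_triangle_ineq4) auto
        also have "\<dots> = norm (\<alpha> (r k) m) * fact (Suc m) + w m" by (simp add: w_def algebra_simps)
        finally show "norm (\<alpha> (r k) m - \<beta> m) * fact m * (real m + 1) \<le> norm (\<alpha> (r k) m) * fact (Suc m) + w m" .
      qed
      have "E (r k) = (\<Sum>i. norm (\<alpha> (r k) (i + N) - \<beta> (i + N)) * fact (i + N)) + (\<Sum>m<N. norm (\<alpha> (r k) m - \<beta> m) * fact m)"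
        unfolding E_def by (rule suminf_split_initial_segment[OF tsum])
      also have "\<dots> < \<epsilon>" using tail H tailN by linarith
      finally have "E (r k) < \<epsilon>" .
      moreover have "0 \<le> E (r k)" unfolding E_def by (intro suminf_nonneg tsum) simp
      ultimately show "norm (E (r k) - 0) < \<epsilon>" by simp
    qed
  qed
  define C' where "C' = max C 0"
  have main: "norm (T (s (r k)) g - X g) \<le> C' * inverse (real (Suc k)) + E (r k)" if g: "g \<in> BL" for k g
  proof -
    let ?k = "r k"
    have gL: "g \<in> Lip0 dM 0" using g by (simp add: Lip0_ball_def)
    have "dual_eq dM 0 (T (\<lambda>g. 1 * s ?k g + (-1) * \<psi> ?k g)) (\<lambda>g. 1 * T (s ?k) g + (-1) * T (\<psi> ?k) g)"
      using L2 s \<psi>free by blast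
    then have eq: "T (\<lambda>g. s ?k g - \<psi> ?k g) g = T (s ?k) g - T (\<psi> ?k) g"
      using gL unfolding dual_eq_def by simp
    have "norm (T (\<lambda>g. s ?k g - \<psi> ?k g) g) \<le> dnorm dM 0 (T (\<lambda>g. s ?k g - \<psi> ?k g))"
      using bddv_val[OF dual_bddv[OF free_dual[OF Tfree[rule_format, OF dfree]]] g] .
    also have "\<dots> \<le> C * dnorm dM 0 (\<lambda>g. s ?k g - \<psi> ?k g)" using C dfree by blast
    also have "\<dots> \<le> C' * dnorm dM 0 (\<lambda>g. s ?k g - \<psi> ?k g)"
      unfolding C'_def using dnn by (intro mult_right_mono) auto
    also have "\<dots> \<le> C' * inverse (real (Suc ?k))"
      unfolding C'_def using dsmall[of ?k] by (intro mult_left_mono) auto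
    also have "\<dots> \<le> C' * inverse (real (Suc k))"
      unfolding C'_def using seq_suble[OF r, of k] by (intro mult_left_mono le_imp_inverse_le) auto
    finally have A: "norm (T (s ?k) g - T (\<psi> ?k) g) \<le> C' * inverse (real (Suc k))" using eq by simp
    have "norm (T (s ?k) g - X g) \<le> norm (T (s ?k) g - T (\<psi> ?k) g) + norm (T (\<psi> ?k) g - X g)"
      using norm_triangle_ineq[of "T (s ?k) g - T (\<psi> ?k) g" "T (\<psi> ?k) g - X g"] by simp
    then show ?thesis using A TX[OF g, of ?k] by linarith
  qed
  have lim: "(\<lambda>k. dnorm dM 0 (\<lambda>g. T (s (r k)) g - X g)) \<longlonglongrightarrow> 0"
  proof (rule tendsto_sandwich[of "\<lambda>_. 0" _ _ "\<lambda>k. C' * inverse (real (Suc k)) + E (r k)"])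
    show "\<forall>\<^sub>F k in sequentially. 0 \<le> dnorm dM 0 (\<lambda>g. T (s (r k)) g - X g)"
    proof (intro always_eventually allI)
      fix k
      show "0 \<le> dnorm dM 0 (\<lambda>g. T (s (r k)) g - X g)"
        by (rule dnorm_nonneg, rule bddvI, rule main)
    qed
    show "\<forall>\<^sub>F k in sequentially. dnorm dM 0 (\<lambda>g. T (s (r k)) g - X g) \<le> C' * inverse (real (Suc k)) + E (r k)"
      using main by (intro always_eventually allI dnorm_le) blast
    show "(\<lambda>_. 0) \<longlonglongrightarrow> (0::real)" by simp
    have "(\<lambda>k. C' * inverse (real (Suc k))) \<longlonglongrightarrow> C' * 0"
      by (intro tendsto_mult_left LIMSEQ_inverse_real_of_nat)
    then show "(\<lambda>k. C' * inverse (real (Suc k)) + E (r k)) \<longlonglongrightarrow> 0"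
      using tendsto_add[OF _ Econv] by fastforce
  qed
  show "\<exists>r \<psi>. strict_mono r \<and> \<psi> \<in> free_space dM 0 \<and> (\<lambda>n. dnorm dM 0 (\<lambda>g. T (s (r n)) g - \<psi> g)) \<longlonglongrightarrow> 0"
    using r Xfree lim by blast
qed


lemma sgn_real: "\<exists>u. norm u \<le> 1 \<and> u * a = of_real (norm (a::real))"
  by (intro exI[of _ "sgn a"]) (simp add: sgn_real_def)

lemma sgn_complex: "\<exists>u. norm u \<le> 1 \<and> u * a = of_real (norm (a::complex))"
proof (cases "a = 0")
  case True then show ?thesis by (intro exI[of _ 0]) auto
next
  case False
  have na: "of_real (norm a) \<noteq> (0::complex)" using False by simp
  have "a * cnj a = of_real (norm a) * of_real (norm a)"
    using complex_norm_square[of a] by (simp add: power2_eq_square)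
  then have "cnj a / of_real (norm a) * a = of_real (norm a)"
    using na by (simp add: divide_simps mult.commute)
  moreover have "norm (cnj a / of_real (norm a)) \<le> 1" using False by (simp add: norm_divide)
  ultimately show ?thesis by blast
qed
lemma dM_nonneg: "0 \<le> dM a b"
  by (simp add: dM_def add_nonneg_nonneg)

lemma dM_le: "dM a b \<le> fact a + fact b"
  by (simp add: dM_def add_nonneg_nonneg)

lemma lip: "lipschitz_map dM fM"
  unfolding lipschitz_map_def
proof (intro exI[of _ 1] allI)
  fix x y
  have f: "fact (x - 1) \<le> (fact x :: real)" "fact (y - 1) \<le> (fact y :: real)"
    by (rule fact_mono, simp)+
  show "dM (fM x) (fM y) \<le> 1 * dM x y"
  proof (cases "fM x = fM y")
    case True then show ?thesis by (simp add: dM_def)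
  next
    case False
    then have xy: "x \<noteq> y" by auto
    show ?thesis
    proof (cases "x = 0")
      case True
      then have y: "y \<noteq> 0" "fM x = 0" "fM y = y - 1" "y - 1 \<noteq> 0" using xy False by (auto simp: fM_def)
      have "dM (fM x) (fM y) = fact (y - 1)" using y by (simp add: dM_def)
      moreover have "dM x y = fact y" using y True by (simp add: dM_def)
      ultimately show ?thesis using f by simp
    next
      case x: False
      show ?thesis
      proof (cases "y = 0")
        case True
        then have y: "fM y = 0" "fM x = x - 1" "x - 1 \<noteq> 0" using x xy False by (auto simp: fM_def)
        have "dM (fM x) (fM y) = fact (x - 1)" using y by (simp add: dM_def)
        moreover have "dM x y = fact x" using x True by (simp add: dM_def)
        ultimately show ?thesis using f by simp
      next
        case False
        have e: "fM x = x - 1" "fM y = y - 1" using x False by (auto simp: fM_def)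
        have "dM (fM x) (fM y) \<le> fact (fM x) + fact (fM y)" by (rule dM_le)
        also have "\<dots> \<le> fact x + fact y" unfolding e using f by (rule add_mono)
        also have "\<dots> = dM x y" using x False xy by (simp add: dM_def)
        finally show ?thesis by simp
      qed
    qed
  qed
qed

lemma surjM: "fM ` UNIV = UNIV"
  by (rule surjI[of _ Suc]) (simp add: fM_def)

lemma not_tb: "\<not> totally_bounded_d dM (fM ` UNIV)"
proof
  assume "totally_bounded_d dM (fM ` UNIV)"
  then have "\<exists>S. finite S \<and> S \<subseteq> fM ` UNIV \<and> (\<forall>x\<in>fM ` UNIV. \<exists>s\<in>S. dM x s < 1)"
    unfolding totally_bounded_d_def by simp
  then obtain S where S: "finite S" "\<forall>x\<in>UNIV. \<exists>s\<in>S. dM x s < 1"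
    unfolding surjM by blast
  define n where "n = Suc (Max (insert 0 S))"
  have "n \<notin> S"
  proof
    assume "n \<in> S"
    then have "n \<le> Max (insert 0 S)" using S(1) by (intro Max_ge) auto
    then show False unfolding n_def by simp
  qed
  obtain s where s: "s \<in> S" "dM n s < 1" using S(2) by blast
  have "s \<noteq> n" using s \<open>n \<notin> S\<close> by auto
  have "n \<noteq> 0" unfolding n_def by simp
  then have "dM n s \<ge> fact n" using \<open>s \<noteq> n\<close> by (simp add: dM_def)
  moreover have "(fact n :: real) \<ge> 1" by (rule fact_ge_1)
  ultimately show False using s by linarith
qed

theorem mainTheorem13:
  shows "lipschitz_map dM fM
    \<and> fM ` UNIV = UNIV
    \<and> \<not> totally_bounded_d dM (fM ` UNIV)
    \<and> (\<forall>T :: ((nat \<Rightarrow> real) \<Rightarrow> real) \<Rightarrow> ((nat \<Rightarrow> real) \<Rightarrow> real).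
          is_linearization dM 0 fM T \<longrightarrow> compact_op dM 0 T)
    \<and> (\<forall>T :: ((nat \<Rightarrow> complex) \<Rightarrow> complex) \<Rightarrow> ((nat \<Rightarrow> complex) \<Rightarrow> complex).
          is_linearization dM 0 fM T \<longrightarrow> compact_op dM 0 T)"
  using lip surjM not_tb compact_gen[OF sgn_real] compact_gen[OF sgn_complex] by blast

end
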